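(* Let $K$ be a field and $X$ a finite connected poset. For every Lie automorphism $\varphi$ of $I(X,K)$, the map $\widetilde\varphi$ is also a Lie automorphism of $I(X,K)$.
   Context: $I(X,K)$ is the incidence algebra: functions $f:X\times X\to K$ with $f(x,y)=0$ unless $x\le y$, product $(fg)(x,y)=\sum_{x\le t\le y}f(x,t)g(t,y)$; $e_{xy}$ ($x\le y$) is the basis element equal to $1$ at $(x,y)$ and $0$ elsewhere. A Lie automorphism is a bijective linear map preserving $[f,g]=fg-gf$. Let $l(\lfloor x,y\rfloor)$ be the maximum length of a chain in $\{z:x\le z\le y\}$, $L_i=\mathrm{span}_K\{e_{xy}: l(\lfloor x,y\rfloor)=i\}$ ($i\ge0$), so $I(X,K)=\bigoplus_i L_i$. $\widetilde\varphi$ is the linear map sending $e_{xy}\in L_i$ to the $L_i$-component of $\varphi(e_{xy})$ (one has $\varphi(e_{xy})-\widetilde\varphi(e_{xy})\in\bigoplus_{k>i}L_k$). Connected means any two elements are joined by a sequence in which consecutive elements are in a covering relation. *)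

theory Defs
  imports Main "HOL-Library.Function_Algebras"
begin

text \<open>The poset X is the finite type 'a with its partial order; K is the field 'k.
Elements of the incidence algebra are functions f :: 'a => 'a => 'k vanishing off the order.\<close>

definition incidence :: "('a::{order,finite} \<Rightarrow> 'a \<Rightarrow> 'k::field) set" where
  "incidence = {f. \<forall>x y. \<not> x \<le> y \<longrightarrow> f x y = 0}"

definition imult :: "('a::{order,finite} \<Rightarrow> 'a \<Rightarrow> 'k::field) \<Rightarrow> ('a \<Rightarrow> 'a \<Rightarrow> 'k) \<Rightarrow> ('a \<Rightarrow> 'a \<Rightarrow> 'k)" where
  "imult f g = (\<lambda>x y. \<Sum>t\<in>{t. x \<le> t \<and> t \<le> y}. f x t * g t y)"

definition ibracket :: "('a::{order,finite} \<Rightarrow> 'a \<Rightarrow> 'k::field) \<Rightarrow> ('a \<Rightarrow> 'a \<Rightarrow> 'k) \<Rightarrow> ('a \<Rightarrow> 'a \<Rightarrow> 'k)" where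
  "ibracket f g = imult f g - imult g f"

definition iscale :: "'k::field \<Rightarrow> ('a \<Rightarrow> 'a \<Rightarrow> 'k) \<Rightarrow> ('a \<Rightarrow> 'a \<Rightarrow> 'k)" where
  "iscale c f = (\<lambda>x y. c * f x y)"

definition ebasis :: "'a::{order,finite} \<Rightarrow> 'a \<Rightarrow> ('a \<Rightarrow> 'a \<Rightarrow> 'k::field)" where
  "ebasis x y = (\<lambda>u v. if u = x \<and> v = y then 1 else 0)"

definition lie_automorphism :: "(('a::{order,finite} \<Rightarrow> 'a \<Rightarrow> 'k::field) \<Rightarrow> ('a \<Rightarrow> 'a \<Rightarrow> 'k)) \<Rightarrow> bool" where
  "lie_automorphism \<phi> \<longleftrightarrow>
     bij_betw \<phi> incidence incidence \<and>
     (\<forall>f\<in>incidence. \<forall>g\<in>incidence. \<phi> (f + g) = \<phi> f + \<phi> g) \<and>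
     (\<forall>c. \<forall>f\<in>incidence. \<phi> (iscale c f) = iscale c (\<phi> f)) \<and>
     (\<forall>f\<in>incidence. \<forall>g\<in>incidence. \<phi> (ibracket f g) = ibracket (\<phi> f) (\<phi> g))"

definition is_chain :: "'a::order set \<Rightarrow> bool" where
  "is_chain C \<longleftrightarrow> (\<forall>a\<in>C. \<forall>b\<in>C. a \<le> b \<or> b \<le> a)"

definition ilen :: "'a::{order,finite} \<Rightarrow> 'a \<Rightarrow> nat" where
  "ilen x y = Max {card C - 1 | C. C \<subseteq> {z. x \<le> z \<and> z \<le> y} \<and> is_chain C}"

definition Lcomp :: "nat \<Rightarrow> ('a::{order,finite} \<Rightarrow> 'a \<Rightarrow> 'k::field) \<Rightarrow> ('a \<Rightarrow> 'a \<Rightarrow> 'k)" where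
  "Lcomp i f = (\<lambda>x y. if x \<le> y \<and> ilen x y = i then f x y else 0)"

definition tilde :: "(('a::{order,finite} \<Rightarrow> 'a \<Rightarrow> 'k::field) \<Rightarrow> ('a \<Rightarrow> 'a \<Rightarrow> 'k)) \<Rightarrow> ('a \<Rightarrow> 'a \<Rightarrow> 'k) \<Rightarrow> ('a \<Rightarrow> 'a \<Rightarrow> 'k)" where
  "tilde \<phi> f = (\<Sum>p\<in>{(x, y). x \<le> y}. iscale (f (fst p) (snd p))
                   (Lcomp (ilen (fst p) (snd p)) (\<phi> (ebasis (fst p) (snd p)))))"

definition covers :: "'a::order \<Rightarrow> 'a \<Rightarrow> bool" where
  "covers x y \<longleftrightarrow> x < y \<and> \<not> (\<exists>z. x < z \<and> z < y)"

definition poset_connected :: "'a::order itself \<Rightarrow> bool" where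
  "poset_connected _ \<longleftrightarrow> (\<forall>a b::'a. (\<lambda>x y. covers x y \<or> covers y x)\<^sup>*\<^sup>* a b)"

end

theory Submission
  imports Defs
begin


lemma sum_fun_apply2: "(\<Sum>p\<in>P. g p) u v = (\<Sum>p\<in>P. g p u v)"
  by (induction P rule: infinite_finite_induct) auto

lemma sum_collect_univ: "(\<Sum>t\<in>{t::'a::finite. P t}. F t) = (\<Sum>t\<in>UNIV. if P t then F t else 0)"
  using sum.inter_filter[of UNIV F P] by simp

lemma double_sum_univ:
  "(\<Sum>s\<in>{s::'a::finite. P s}. \<Sum>t\<in>{t::'b::finite. Q s t}. F s t)
   = (\<Sum>s\<in>UNIV. \<Sum>t\<in>UNIV. if P s \<and> Q s t then F s t else 0)"
  unfolding sum_collect_univ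
  by (rule sum.cong[OF refl]) (auto)

lemma imult_assoc: "imult (imult f g) h = imult f (imult g h)"
proof (intro ext)
  fix x y :: 'a
  have "imult (imult f g) h x y = (\<Sum>s\<in>{s. x \<le> s \<and> s \<le> y}. \<Sum>t\<in>{t. x \<le> t \<and> t \<le> s}. f x t * g t s * h s y)"
    by (simp add: imult_def sum_distrib_right)
  also have "\<dots> = (\<Sum>s\<in>UNIV. \<Sum>t\<in>UNIV. if (x \<le> s \<and> s \<le> y) \<and> (x \<le> t \<and> t \<le> s) then f x t * g t s * h s y else 0)"
    by (rule double_sum_univ)
  also have "\<dots> = (\<Sum>t\<in>UNIV. \<Sum>s\<in>UNIV. if (x \<le> s \<and> s \<le> y) \<and> (x \<le> t \<and> t \<le> s) then f x t * g t s * h s y else 0)"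
    by (rule sum.swap)
  also have "\<dots> = (\<Sum>t\<in>UNIV. \<Sum>s\<in>UNIV. if (x \<le> t \<and> t \<le> y) \<and> (t \<le> s \<and> s \<le> y) then f x t * g t s * h s y else 0)"
    by (intro sum.cong refl) (auto intro: order_trans)
  also have "\<dots> = (\<Sum>t\<in>{t. x \<le> t \<and> t \<le> y}. \<Sum>s\<in>{s. t \<le> s \<and> s \<le> y}. f x t * g t s * h s y)"
    by (rule double_sum_univ[symmetric])
  also have "\<dots> = imult f (imult g h) x y"
    by (simp add: imult_def sum_distrib_left mult.assoc)
  finally show "imult (imult f g) h x y = imult f (imult g h) x y" .
qed



lemma incidence_iff: "f \<in> incidence \<longleftrightarrow> (\<forall>x y. \<not> x \<le> y \<longrightarrow> f x y = 0)"
  by (simp add: incidence_def)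

lemma imult_add_left: "imult (f + g) h = imult f h + imult g h"
  by (auto simp: imult_def fun_eq_iff distrib_right sum.distrib)
lemma imult_add_right: "imult h (f + g) = imult h f + imult h g"
  by (auto simp: imult_def fun_eq_iff distrib_left sum.distrib)
lemma imult_diff_left: "imult (f - g) h = imult f h - imult g h"
  by (auto simp: imult_def fun_eq_iff left_diff_distrib sum_subtractf)
lemma imult_diff_right: "imult h (f - g) = imult h f - imult h g"
  by (auto simp: imult_def fun_eq_iff right_diff_distrib sum_subtractf)
lemma imult_scale_left: "imult (iscale c f) h = iscale c (imult f h)"
  by (auto simp: imult_def iscale_def fun_eq_iff sum_distrib_left mult.assoc)
lemma imult_scale_right: "imult h (iscale c f) = iscale c (imult h f)"
  by (auto simp: imult_def iscale_def fun_eq_iff sum_distrib_left mult.assoc mult.left_commute)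
lemma imult_zero_left[simp]: "imult 0 h = 0"
  by (auto simp: imult_def fun_eq_iff)
lemma imult_zero_right[simp]: "imult h 0 = 0"
  by (auto simp: imult_def fun_eq_iff)

lemma imult_incidence[simp]: "imult f g \<in> incidence"
  by (auto simp: incidence_iff imult_def intro!: sum.neutral dest: order_trans)

lemma incidence_add[simp]: "f \<in> incidence \<Longrightarrow> g \<in> incidence \<Longrightarrow> f + g \<in> incidence"
  by (simp add: incidence_iff)
lemma incidence_diff[simp]: "f \<in> incidence \<Longrightarrow> g \<in> incidence \<Longrightarrow> f - g \<in> incidence"
  by (simp add: incidence_iff)
lemma ibracket_incidence[simp]: "ibracket f g \<in> incidence"
  unfolding ibracket_def by (intro incidence_diff imult_incidence)
lemma incidence_scale[simp]: "f \<in> incidence \<Longrightarrow> iscale c f \<in> incidence"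
  by (simp add: incidence_iff iscale_def)
lemma incidence_zero[simp]: "0 \<in> incidence"
  by (simp add: incidence_iff)
lemma incidence_sum: "(\<And>p. p \<in> P \<Longrightarrow> g p \<in> incidence) \<Longrightarrow> (\<Sum>p\<in>P. g p) \<in> incidence"
  by (induction P rule: infinite_finite_induct) auto
lemma ebasis_incidence[simp]: "x \<le> y \<Longrightarrow> ebasis x y \<in> incidence"
  by (auto simp: incidence_iff ebasis_def)

lemma iscale_add: "iscale c (f + g) = iscale c f + iscale c g"
  by (simp add: iscale_def fun_eq_iff distrib_left)
lemma iscale_diff: "iscale c (f - g) = iscale c f - iscale c g"
  by (simp add: iscale_def fun_eq_iff right_diff_distrib)
lemma iscale_add_left: "iscale (c + d) f = iscale c f + iscale d f"
  by (simp add: iscale_def fun_eq_iff distrib_right)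
lemma iscale_mult: "iscale c (iscale d f) = iscale (c * d) f"
  by (simp add: iscale_def fun_eq_iff mult.assoc)
lemma iscale_one[simp]: "iscale 1 f = f"
  by (simp add: iscale_def)
lemma iscale_zero[simp]: "iscale 0 f = 0" "iscale c 0 = 0"
  by (simp_all add: iscale_def fun_eq_iff)
lemma iscale_apply: "iscale c f x y = c * f x y"
  by (simp add: iscale_def)

lemma ibracket_add_left: "ibracket (f + g) h = ibracket f h + ibracket g h"
  by (simp add: ibracket_def imult_add_left imult_add_right)
lemma ibracket_add_right: "ibracket h (f + g) = ibracket h f + ibracket h g"
  by (simp add: ibracket_def imult_add_left imult_add_right)
lemma ibracket_scale_left: "ibracket (iscale c f) h = iscale c (ibracket f h)"
  by (simp add: ibracket_def imult_scale_left imult_scale_right iscale_diff)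
lemma ibracket_scale_right: "ibracket h (iscale c f) = iscale c (ibracket h f)"
  by (simp add: ibracket_def imult_scale_left imult_scale_right iscale_diff)

lemma ebasis_apply: "ebasis a b u v = (if u = a \<and> v = b then 1 else 0)"
  by (simp add: ebasis_def)

lemma imult_ebasis:
  "imult (ebasis a b) (ebasis c d) = (if b = c \<and> a \<le> b \<and> b \<le> d then ebasis a d else 0)"
proof (intro ext)
  fix u v :: 'a
  have "imult (ebasis a b) (ebasis c d) u v =
        (\<Sum>t\<in>{t. u \<le> t \<and> t \<le> v}. if t = b then (if u = a \<and> b = c \<and> v = d then 1 else 0) else 0)"
    unfolding imult_def ebasis_def by (intro sum.cong refl) auto
  also have "\<dots> = (if b \<in> {t. u \<le> t \<and> t \<le> v} then (if u = a \<and> b = c \<and> v = d then 1 else 0) else 0)"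
    by (rule sum.delta) simp
  also have "\<dots> = (if b = c \<and> a \<le> b \<and> b \<le> d then ebasis a d else 0) u v"
    by (auto simp: ebasis_def)
  finally show "imult (ebasis a b) (ebasis c d) u v = (if b = c \<and> a \<le> b \<and> b \<le> d then ebasis a d else 0) u v" .
qed

lemma incidence_expand:
  assumes "f \<in> incidence"
  shows "f = (\<Sum>p\<in>{(x, y). x \<le> y}. iscale (f (fst p) (snd p)) (ebasis (fst p) (snd p)))"
proof (intro ext)
  fix u v :: 'a
  have "(\<Sum>p\<in>{(x, y). x \<le> y}. iscale (f (fst p) (snd p)) (ebasis (fst p) (snd p))) u v
      = (\<Sum>p\<in>{(x, y). x \<le> y}. if p = (u, v) then f u v else 0)"
    unfolding sum_fun_apply2
    by (intro sum.cong refl) (auto simp: iscale_def ebasis_def)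
  also have "\<dots> = f u v"
    using assms by (auto simp: sum.delta incidence_iff)
  finally show "f u v = (\<Sum>p\<in>{(x, y). x \<le> y}. iscale (f (fst p) (snd p)) (ebasis (fst p) (snd p))) u v" ..
qed

definition lin :: "(('a::{order,finite} \<Rightarrow> 'a \<Rightarrow> 'k::field) \<Rightarrow> ('a \<Rightarrow> 'a \<Rightarrow> 'k)) \<Rightarrow> bool" where
  "lin \<Phi> \<longleftrightarrow> (\<forall>f\<in>incidence. \<forall>g\<in>incidence. \<Phi> (f + g) = \<Phi> f + \<Phi> g) \<and>
     (\<forall>c. \<forall>f\<in>incidence. \<Phi> (iscale c f) = iscale c (\<Phi> f))"

lemma lin_zero: "lin \<Phi> \<Longrightarrow> \<Phi> 0 = 0"
  unfolding lin_def by (metis add_cancel_right_right incidence_zero)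

lemma lin_sum:
  assumes "lin \<Phi>" "\<And>p. p \<in> P \<Longrightarrow> g p \<in> incidence"
  shows "\<Phi> (\<Sum>p\<in>P. g p) = (\<Sum>p\<in>P. \<Phi> (g p))"
  using assms(2)
proof (induction P rule: infinite_finite_induct)
  case (infinite A) then show ?case using lin_zero[OF assms(1)] by (metis sum.infinite)
next
  case empty then show ?case using lin_zero[OF assms(1)] by (metis sum.empty)
next
  case (insert x F)
  have "\<Phi> (\<Sum>p\<in>insert x F. g p) = \<Phi> (g x + (\<Sum>p\<in>F. g p))"
    by (subst sum.insert[OF insert.hyps]) (rule refl)
  also have "\<dots> = \<Phi> (g x) + \<Phi> (\<Sum>p\<in>F. g p)"
    using assms(1) insert incidence_sum[of F g] unfolding lin_def by blast
  also have "\<dots> = (\<Sum>p\<in>insert x F. \<Phi> (g p))"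
    using insert.IH insert.prems by (subst sum.insert[OF insert.hyps]) auto
  finally show ?case .
qed

lemma lie_lin: "lie_automorphism \<Phi> \<Longrightarrow> lin \<Phi>"
  by (simp add: lie_automorphism_def lin_def)



lemma ilen_set_finite:
  "finite {card C - 1 | C. C \<subseteq> {z::'a::{order,finite}. x \<le> z \<and> z \<le> y} \<and> is_chain C}"
proof -
  have "{card C - 1 | C. C \<subseteq> {z::'a. x \<le> z \<and> z \<le> y} \<and> is_chain C}
        = (\<lambda>C. card C - 1) ` {C. C \<subseteq> {z::'a. x \<le> z \<and> z \<le> y} \<and> is_chain C}" by auto
  then show ?thesis by simp
qed

lemma ilen_ge:
  fixes x y :: "'a::{order,finite}"
  assumes "C \<subseteq> {z. x \<le> z \<and> z \<le> y}" "is_chain C"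
  shows "card C - 1 \<le> ilen x y"
  unfolding ilen_def using assms by (intro Max_ge[OF ilen_set_finite]) auto

lemma ilen_obtain:
  fixes x y :: "'a::{order,finite}"
  obtains C where "C \<subseteq> {z. x \<le> z \<and> z \<le> y}" "is_chain C" "ilen x y = card C - 1"
proof -
  have "ilen x y \<in> {card C - 1 | C. C \<subseteq> {z::'a. x \<le> z \<and> z \<le> y} \<and> is_chain C}"
    unfolding ilen_def
    by (rule Max_in[OF ilen_set_finite]) (auto intro!: exI[of _ "{}"] simp: is_chain_def)
  then show ?thesis using that by auto
qed

lemma ilen_refl[simp]: "ilen (x::'a::{order,finite}) x = 0"
proof -
  obtain C where C: "C \<subseteq> {z. x \<le> z \<and> z \<le> x}" "ilen x x = card C - 1"
    using ilen_obtain by metis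
  have "C \<subseteq> {x}" using C(1) by (auto intro: order_antisym)
  then have "card C \<le> 1" using card_mono[of "{x}" C] by simp
  then show ?thesis using C(2) by simp
qed

lemma ilen_pos:
  fixes x y :: "'a::{order,finite}"
  assumes "x < y" shows "1 \<le> ilen x y"
proof -
  have "card {x, y} - 1 \<le> ilen x y"
    using assms by (intro ilen_ge) (auto simp: is_chain_def)
  then show ?thesis using assms by simp
qed

lemma ilen_less_card: "ilen (x::'a::{order,finite}) y < card (UNIV::'a set)"
proof -
  obtain C :: "'a set" where C: "ilen x y = card C - 1"
    using ilen_obtain by metis
  have "card C \<le> card (UNIV::'a set)" by (rule card_mono) auto
  moreover have "0 < card (UNIV::'a set)" by (simp add: finite_UNIV_card_ge_0)
  ultimately show ?thesis using C by linarith
qed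

lemma ilen_trans:
  fixes x y z :: "'a::{order,finite}"
  assumes "x \<le> y" "y \<le> z"
  shows "ilen x y + ilen y z \<le> ilen x z"
proof -
  obtain C1 where C1: "C1 \<subseteq> {w. x \<le> w \<and> w \<le> y}" "is_chain C1" "ilen x y = card C1 - 1"
    using ilen_obtain by metis
  obtain C2 where C2: "C2 \<subseteq> {w. y \<le> w \<and> w \<le> z}" "is_chain C2" "ilen y z = card C2 - 1"
    using ilen_obtain by metis
  define A where "A = insert y C1"
  define B where "B = insert y C2"
  have fin: "finite A" "finite B" by auto
  have Aint: "A \<subseteq> {w. x \<le> w \<and> w \<le> y}" using C1 assms by (auto simp: A_def)
  have Bint: "B \<subseteq> {w. y \<le> w \<and> w \<le> z}" using C2 assms by (auto simp: B_def)
  have AB: "A \<inter> B = {y}" using Aint Bint by (auto simp: A_def B_def intro: order_antisym)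
  have chain: "is_chain (A \<union> B)"
    using C1(2) C2(2) Aint Bint unfolding is_chain_def A_def B_def
    by (auto intro: order_trans)
  have sub: "A \<union> B \<subseteq> {w. x \<le> w \<and> w \<le> z}" using Aint Bint assms by (auto intro: order_trans)
  have "card (A \<union> B) - 1 \<le> ilen x z" by (rule ilen_ge[OF sub chain])
  moreover have "card (A \<union> B) = card A + card B - 1"
    using card_Un_Int[OF fin] AB by simp
  moreover have "card C1 \<le> card A" "card C2 \<le> card B" "1 \<le> card A" "1 \<le> card B"
    unfolding A_def B_def by (auto intro: card_mono simp: card_insert_if Suc_le_eq card_gt_0_iff)
  ultimately show ?thesis using C1(3) C2(3) by linarith
qed

lemma ilen_split:
  fixes x z :: "'a::{order,finite}"
  assumes "Suc k \<le> ilen x z"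
  shows "\<exists>y. x < y \<and> y \<le> z \<and> k \<le> ilen y z"
proof -
  obtain C where C: "C \<subseteq> {w. x \<le> w \<and> w \<le> z}" "is_chain C" "ilen x z = card C - 1"
    using ilen_obtain by metis
  have cardC: "Suc (Suc k) \<le> card C" using assms C(3) by linarith
  have fC: "finite C" by simp
  then have "C \<noteq> {}" using cardC by auto
  then obtain m0 where m0: "m0 \<in> C" "\<forall>b\<in>C. b \<le> m0 \<longrightarrow> m0 = b"
    using finite_has_minimal[OF fC] by blast
  define C' where "C' = C - {m0}"
  have cardC': "card C' = card C - 1" unfolding C'_def using m0(1) by simp
  then have "C' \<noteq> {}" using cardC by auto
  then obtain y where y: "y \<in> C'" "\<forall>b\<in>C'. b \<le> y \<longrightarrow> y = b"
    using finite_has_minimal[of C'] by (auto simp: C'_def)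
  have ych: "\<forall>b\<in>C'. y \<le> b"
    using y C(2) unfolding is_chain_def C'_def by auto
  have "m0 \<le> y \<or> y \<le> m0" using C(2) m0(1) y(1) unfolding is_chain_def C'_def by auto
  then have "m0 < y" using m0 y(1) unfolding C'_def by (auto simp: less_le)
  moreover have "x \<le> m0" using C(1) m0(1) by auto
  ultimately have "x < y" by simp
  moreover have "y \<le> z" using C(1) y(1) unfolding C'_def by auto
  moreover have "card C' - 1 \<le> ilen y z"
  proof (rule ilen_ge)
    show "C' \<subseteq> {w. y \<le> w \<and> w \<le> z}" using ych C(1) unfolding C'_def by auto
    show "is_chain C'" using C(2) unfolding is_chain_def C'_def by auto
  qed
  ultimately show ?thesis using cardC cardC' by (intro exI[of _ y]) auto
qed



definition Fil :: "nat \<Rightarrow> ('a::{order,finite} \<Rightarrow> 'a \<Rightarrow> 'k::field) set" where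
  "Fil i = {f. f \<in> incidence \<and> (\<forall>u v. f u v \<noteq> 0 \<longrightarrow> i \<le> ilen u v)}"

lemma Fil_iff: "f \<in> Fil i \<longleftrightarrow> f \<in> incidence \<and> (\<forall>u v. f u v \<noteq> 0 \<longrightarrow> i \<le> ilen u v)"
  by (simp add: Fil_def)

lemma Fil_incidence: "f \<in> Fil i \<Longrightarrow> f \<in> incidence"
  by (simp add: Fil_def)

lemma Fil_0: "Fil 0 = incidence"
  by (auto simp: Fil_def)

lemma Fil_mono: "i \<le> j \<Longrightarrow> f \<in> Fil j \<Longrightarrow> f \<in> Fil i"
  by (auto simp: Fil_def intro: le_trans)

lemma Fil_add: "f \<in> Fil i \<Longrightarrow> g \<in> Fil i \<Longrightarrow> f + g \<in> Fil i"
  by (simp add: Fil_def) (metis add.right_neutral add_0)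

lemma Fil_diff: "f \<in> Fil i \<Longrightarrow> g \<in> Fil i \<Longrightarrow> f - g \<in> Fil i"
  by (simp add: Fil_def) (metis)

lemma Fil_scale: "f \<in> Fil i \<Longrightarrow> iscale c f \<in> Fil i"
  unfolding Fil_iff using incidence_scale[of f c] by (auto simp: iscale_apply)

lemma Fil_zero: "0 \<in> Fil i"
  by (auto simp: Fil_def)

lemma Fil_sum: "(\<And>p. p \<in> P \<Longrightarrow> g p \<in> Fil i) \<Longrightarrow> (\<Sum>p\<in>P. g p) \<in> Fil i"
  by (induction P rule: infinite_finite_induct) (auto intro: Fil_add Fil_zero)

lemma ebasis_Fil: "x \<le> y \<Longrightarrow> ebasis x y \<in> Fil (ilen x y)"
  by (auto simp: Fil_def ebasis_def incidence_def)

lemma imult_Fil: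
  assumes "f \<in> Fil a" "g \<in> Fil b"
  shows "imult f g \<in> Fil (a + b)"
  unfolding Fil_iff
proof (intro conjI allI impI)
  show "imult f g \<in> incidence" by simp
  fix u v
  assume "imult f g u v \<noteq> 0"
  then obtain t where t: "u \<le> t" "t \<le> v" "f u t * g t v \<noteq> 0"
    unfolding imult_def by (metis (mono_tags, lifting) mem_Collect_eq sum.neutral)
  then have "a \<le> ilen u t" "b \<le> ilen t v" using assms by (auto simp: Fil_iff)
  then show "a + b \<le> ilen u v" using ilen_trans[OF t(1,2)] by linarith
qed

lemma ibracket_Fil:
  assumes "f \<in> Fil a" "g \<in> Fil b"
  shows "ibracket f g \<in> Fil (a + b)"
  unfolding ibracket_def using imult_Fil[OF assms] imult_Fil[OF assms(2,1)]
  by (auto intro: Fil_diff simp: add.commute)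

lemma imult_diag: "imult f g u u = f u u * g u u"
proof -
  have "{t. u \<le> t \<and> t \<le> u} = {u}" by (auto intro: order_antisym)
  then show ?thesis by (simp add: imult_def)
qed

lemma ibracket_Fil1:
  assumes "f \<in> incidence" "g \<in> incidence"
  shows "ibracket f g \<in> Fil 1"
  unfolding Fil_iff
proof (intro conjI allI impI)
  show "ibracket f g \<in> incidence" by simp
  fix u v assume nz: "ibracket f g u v \<noteq> 0"
  have "u \<noteq> v" using nz by (auto simp: ibracket_def imult_diag mult.commute)
  moreover have "u \<le> v" using nz ibracket_incidence[of f g] by (auto simp: incidence_iff)
  ultimately show "1 \<le> ilen u v" by (intro ilen_pos) simp
qed

lemma ibracket_ebasis_chain:
  assumes "x < y" "y \<le> z"
  shows "ibracket (ebasis x y) (ebasis y z) = ebasis x z"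
proof -
  have "z \<noteq> x" using assms by auto
  then show ?thesis using assms by (simp add: ibracket_def imult_ebasis less_imp_le)
qed

lemma ibracket_ebasis_diag:
  assumes "x < y"
  shows "ibracket (ebasis x x) (ebasis x y) = ebasis x y"
  using assms by (auto simp: ibracket_def imult_ebasis less_imp_le)

definition lieh :: "(('a::{order,finite} \<Rightarrow> 'a \<Rightarrow> 'k::field) \<Rightarrow> ('a \<Rightarrow> 'a \<Rightarrow> 'k)) \<Rightarrow> bool" where
  "lieh \<Phi> \<longleftrightarrow> lin \<Phi> \<and> (\<forall>f\<in>incidence. \<Phi> f \<in> incidence) \<and>
     (\<forall>f\<in>incidence. \<forall>g\<in>incidence. \<Phi> (ibracket f g) = ibracket (\<Phi> f) (\<Phi> g))"

lemma lie_lieh: "lie_automorphism \<Phi> \<Longrightarrow> lieh \<Phi>"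
  unfolding lie_automorphism_def lieh_def lin_def bij_betw_def by auto

lemma lieh_basis1:
  assumes "lieh \<Phi>" "x < y"
  shows "\<Phi> (ebasis x y) \<in> Fil 1"
proof -
  have "\<Phi> (ebasis x y) = \<Phi> (ibracket (ebasis x x) (ebasis x y))"
    by (subst ibracket_ebasis_diag[OF assms(2)]) (rule refl)
  also have "\<dots> = ibracket (\<Phi> (ebasis x x)) (\<Phi> (ebasis x y))"
    using assms by (simp add: lieh_def less_imp_le)
  moreover have "\<Phi> (ebasis x x) \<in> incidence" "\<Phi> (ebasis x y) \<in> incidence"
    using assms by (auto simp: lieh_def less_imp_le)
  ultimately show ?thesis using ibracket_Fil1 by metis
qed

lemma lieh_basis:
  assumes "lieh \<Phi>"
  shows "x \<le> y \<Longrightarrow> k \<le> ilen x y \<Longrightarrow> \<Phi> (ebasis x y) \<in> Fil k"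
proof (induction k arbitrary: x y)
  case 0
  then show ?case using assms by (simp add: Fil_0 lieh_def)
next
  case (Suc k)
  then have xy: "x < y" using ilen_refl[of x] by (cases "x = y") auto
  show ?case
  proof (cases "k = 0")
    case True
    then show ?thesis using lieh_basis1[OF assms xy] by simp
  next
    case False
    obtain y' where y': "x < y'" "y' \<le> y" "k \<le> ilen y' y"
      using ilen_split[OF Suc.prems(2)] by blast
    have "\<Phi> (ebasis x y) = \<Phi> (ibracket (ebasis x y') (ebasis y' y))"
      by (subst ibracket_ebasis_chain[OF y'(1,2)]) (rule refl)
    also have "\<dots> = ibracket (\<Phi> (ebasis x y')) (\<Phi> (ebasis y' y))"
      using assms y' by (simp add: lieh_def less_imp_le)
    finally show ?thesis
      using ibracket_Fil[OF lieh_basis1[OF assms y'(1)] Suc.IH[OF y'(2,3)]] by simp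
  qed
qed

lemma lieh_Fil:
  assumes "lieh \<Phi>" "f \<in> Fil i"
  shows "\<Phi> f \<in> Fil i"
proof -
  have finc: "f \<in> incidence" using assms(2) by (simp add: Fil_def)
  have "\<Phi> f = \<Phi> (\<Sum>p\<in>{(x, y). x \<le> y}. iscale (f (fst p) (snd p)) (ebasis (fst p) (snd p)))"
    using incidence_expand[OF finc] by simp
  also have "\<dots> = (\<Sum>p\<in>{(x, y). x \<le> y}. \<Phi> (iscale (f (fst p) (snd p)) (ebasis (fst p) (snd p))))"
    using assms(1) by (intro lin_sum) (auto simp: lieh_def)
  also have "\<dots> = (\<Sum>p\<in>{(x, y). x \<le> y}. iscale (f (fst p) (snd p)) (\<Phi> (ebasis (fst p) (snd p))))"
    using assms(1) by (intro sum.cong refl) (auto simp: lieh_def lin_def)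
  finally have eq: "\<Phi> f = \<dots>" .
  show ?thesis unfolding eq
  proof (rule Fil_sum)
    fix p :: "'a \<times> 'a" assume p: "p \<in> {(x, y). x \<le> y}"
    show "iscale (f (fst p) (snd p)) (\<Phi> (ebasis (fst p) (snd p))) \<in> Fil i"
    proof (cases "f (fst p) (snd p) = 0")
      case True then show ?thesis by (simp add: Fil_zero)
    next
      case False
      then have "i \<le> ilen (fst p) (snd p)" using assms(2) by (auto simp: Fil_def)
      then show ?thesis using p lieh_basis[OF assms(1)] by (auto intro: Fil_scale)
    qed
  qed
qed



lemma imult_ebasis_left:
  "imult (ebasis s t) g u v = (if u = s \<and> s \<le> t \<and> t \<le> v then g t v else 0)"
proof -
  have "imult (ebasis s t) g u v = (\<Sum>\<tau>\<in>{\<tau>. u \<le> \<tau> \<and> \<tau> \<le> v}. if \<tau> = t then (if u = s then g t v else 0) else 0)"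
    unfolding imult_def ebasis_def by (intro sum.cong refl) auto
  also have "\<dots> = (if t \<in> {\<tau>. u \<le> \<tau> \<and> \<tau> \<le> v} then (if u = s then g t v else 0) else 0)"
    by (rule sum.delta) simp
  finally show ?thesis by auto
qed

lemma imult_ebasis_right:
  "imult g (ebasis s t) u v = (if v = t \<and> u \<le> s \<and> s \<le> t then g u s else 0)"
proof -
  have "imult g (ebasis s t) u v = (\<Sum>\<tau>\<in>{\<tau>. u \<le> \<tau> \<and> \<tau> \<le> v}. if \<tau> = s then (if v = t then g u s else 0) else 0)"
    unfolding imult_def ebasis_def by (intro sum.cong refl) auto
  also have "\<dots> = (if s \<in> {\<tau>. u \<le> \<tau> \<and> \<tau> \<le> v} then (if v = t then g u s else 0) else 0)"
    by (rule sum.delta) simp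
  finally show ?thesis by auto
qed

lemma ibracket_ebasis_apply:
  assumes "g \<in> incidence" "s \<le> t"
  shows "ibracket (ebasis s t) g u v = (if u = s then g t v else 0) - (if v = t then g u s else 0)"
  using assms by (auto simp: ibracket_def imult_ebasis_left imult_ebasis_right incidence_iff
      intro: order_trans)

lemma ebasis_sandwich:
  assumes "s < t"
  shows "imult (ebasis s t) (imult h (ebasis s t)) = 0"
  using assms by (auto simp: fun_eq_iff imult_ebasis_left imult_ebasis_right)

lemma ebasis_sq:
  assumes "s < t"
  shows "imult (ebasis s t) (ebasis s t) = 0"
  using assms by (auto simp: imult_ebasis)

lemma ibracket_deriv:
  "ibracket e (ibracket f g) = ibracket (ibracket e f) g + ibracket f (ibracket e g)"
  by (simp add: ibracket_def imult_diff_left imult_diff_right imult_assoc algebra_simps)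

lemma ibracket_ee:
  assumes "s < t"
  shows "ibracket (ebasis s t) (ibracket (ebasis s t) f) = 0"
proof -
  have "imult (imult (ebasis s t) f) (ebasis s t) = 0"
    using ebasis_sandwich[OF assms] by (simp add: imult_assoc)
  moreover have "imult (ebasis s t) (imult (ebasis s t) f) = 0"
    using ebasis_sq[OF assms] by (metis imult_assoc imult_zero_left)
  moreover have "imult (imult f (ebasis s t)) (ebasis s t) = 0"
    using ebasis_sq[OF assms] by (metis imult_assoc imult_zero_right)
  ultimately show ?thesis
    using ebasis_sandwich[OF assms, of f]
    by (simp add: ibracket_def imult_diff_left imult_diff_right)
qed

lemma ibracket_efeg:
  assumes "s < t"
  shows "ibracket (ibracket (ebasis s t) f) (ibracket (ebasis s t) g) = 0"
proof -
  let ?e = "ebasis s t"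
  have Z: "\<And>h. imult ?e (imult h ?e) = 0" using ebasis_sandwich[OF assms] .
  have Z2: "imult ?e ?e = 0" using ebasis_sq[OF assms] .
  have a1: "\<And>h k. imult (imult ?e h) (imult ?e k) = 0"
    by (metis Z imult_assoc imult_zero_left)
  have a2: "\<And>h k. imult (imult h ?e) (imult ?e k) = 0"
    by (metis Z2 imult_assoc imult_zero_left imult_zero_right)
  have a3: "\<And>h k. imult (imult h ?e) (imult k ?e) = 0"
    by (metis Z imult_assoc imult_zero_right)
  have a4: "\<And>h k. imult (imult ?e h) (imult k ?e) = imult ?e (imult (imult h k) ?e)"
    by (simp add: imult_assoc)
  show ?thesis
    by (simp add: ibracket_def imult_diff_left imult_diff_right a1 a2 a3 a4 Z)
qed

definition conjw :: "'a::{order,finite} \<Rightarrow> 'a \<Rightarrow> 'k::field \<Rightarrow> ('a \<Rightarrow> 'a \<Rightarrow> 'k) \<Rightarrow> ('a \<Rightarrow> 'a \<Rightarrow> 'k)" where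
  "conjw s t \<alpha> f = f + iscale \<alpha> (ibracket (ebasis s t) f)"

lemma conjw_incidence: "f \<in> incidence \<Longrightarrow> conjw s t \<alpha> f \<in> incidence"
  by (simp add: conjw_def)

lemma conjw_inv:
  assumes "s < t"
  shows "conjw s t (- \<alpha>) (conjw s t \<alpha> f) = f"
proof -
  have "ibracket (ebasis s t) (conjw s t \<alpha> f) = ibracket (ebasis s t) f"
    by (simp add: conjw_def ibracket_add_right ibracket_scale_right ibracket_ee[OF assms])
  then show ?thesis
    by (simp add: conjw_def add.assoc flip: iscale_add_left)
qed

lemma conjw_bracket:
  assumes "s < t"
  shows "conjw s t \<alpha> (ibracket f g) = ibracket (conjw s t \<alpha> f) (conjw s t \<alpha> g)"
proof -
  let ?e = "ebasis s t"
  have "ibracket (conjw s t \<alpha> f) (conjw s t \<alpha> g)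
      = ibracket f g + iscale \<alpha> (ibracket f (ibracket ?e g)) + iscale \<alpha> (ibracket (ibracket ?e f) g)"
    by (simp add: conjw_def ibracket_add_left ibracket_add_right ibracket_scale_left
        ibracket_scale_right ibracket_efeg[OF assms] add_ac)
  also have "\<dots> = ibracket f g + iscale \<alpha> (ibracket ?e (ibracket f g))"
    using ibracket_deriv[of ?e f g] by (simp add: iscale_add add_ac)
  finally show ?thesis by (simp add: conjw_def)
qed

lemma conjw_lie:
  assumes "s < t"
  shows "lie_automorphism (conjw s t \<alpha>)"
  unfolding lie_automorphism_def
proof (intro conjI ballI allI)
  show "bij_betw (conjw s t \<alpha>) incidence incidence"
    by (rule bij_betw_byWitness[where f' = "conjw s t (- \<alpha>)"])
      (auto simp: conjw_incidence conjw_inv[OF assms]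
        intro: conjw_inv[OF assms, of "- \<alpha>", simplified])
next
  fix f g :: "'a \<Rightarrow> 'a \<Rightarrow> 'b"
  show "conjw s t \<alpha> (f + g) = conjw s t \<alpha> f + conjw s t \<alpha> g"
    by (simp add: conjw_def ibracket_add_right iscale_add add_ac)
  show "conjw s t \<alpha> (ibracket f g) = ibracket (conjw s t \<alpha> f) (conjw s t \<alpha> g)"
    by (rule conjw_bracket[OF assms])
next
  fix c and f :: "'a \<Rightarrow> 'a \<Rightarrow> 'b"
  show "conjw s t \<alpha> (iscale c f) = iscale c (conjw s t \<alpha> f)"
    by (simp add: conjw_def ibracket_scale_right iscale_add iscale_mult mult.commute)
qed

lemma lie_comp:
  assumes "lie_automorphism A" "lie_automorphism B"
  shows "lie_automorphism (A \<circ> B)"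
proof -
  have Binc: "\<And>f. f \<in> incidence \<Longrightarrow> B f \<in> incidence"
    using assms(2) unfolding lie_automorphism_def bij_betw_def by auto
  show ?thesis
    using assms Binc unfolding lie_automorphism_def
    by (auto intro: bij_betw_trans)
qed

lemma lie_cong:
  assumes "lie_automorphism A" "\<And>f. f \<in> incidence \<Longrightarrow> B f = A f"
  shows "lie_automorphism B"
proof -
  have "bij_betw B incidence incidence"
    using assms(1) bij_betw_cong[of incidence A B] assms(2) unfolding lie_automorphism_def by metis
  then show ?thesis using assms unfolding lie_automorphism_def
    by (simp add: incidence_scale)
qed

lemma lie_inv:
  assumes "lie_automorphism A"
  shows "lieh (inv_into incidence A)"
proof -
  have bij: "bij_betw A incidence incidence" using assms by (simp add: lie_automorphism_def)
  let ?B = "inv_into incidence A"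
  have Binc: "\<And>f. f \<in> incidence \<Longrightarrow> ?B f \<in> incidence"
    using bij by (metis bij_betw_def inv_into_into)
  have AB: "\<And>f. f \<in> incidence \<Longrightarrow> A (?B f) = f"
    by (rule bij_betw_inv_into_right[OF bij])
  have BA: "\<And>f. f \<in> incidence \<Longrightarrow> ?B (A f) = f"
    by (rule bij_betw_inv_into_left[OF bij])
  have ops: "\<And>f g. f \<in> incidence \<Longrightarrow> g \<in> incidence \<Longrightarrow> A (f + g) = A f + A g"
    "\<And>c f. f \<in> incidence \<Longrightarrow> A (iscale c f) = iscale c (A f)"
    "\<And>f g. f \<in> incidence \<Longrightarrow> g \<in> incidence \<Longrightarrow> A (ibracket f g) = ibracket (A f) (A g)"
    using assms by (auto simp: lie_automorphism_def)
  show ?thesis unfolding lieh_def lin_def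
  proof (intro conjI ballI allI)
    fix f g :: "'a \<Rightarrow> 'a \<Rightarrow> 'b" assume f: "f \<in> incidence" and g: "g \<in> incidence"
    show "?B (f + g) = ?B f + ?B g"
      using ops(1)[OF Binc[OF f] Binc[OF g]] AB[OF f] AB[OF g] BA Binc f g
      by (metis incidence_add)
    show "?B (ibracket f g) = ibracket (?B f) (?B g)"
      using ops(3)[OF Binc[OF f] Binc[OF g]] AB[OF f] AB[OF g] BA Binc f g
      by (metis ibracket_incidence)
  next
    fix c and f :: "'a \<Rightarrow> 'a \<Rightarrow> 'b" assume f: "f \<in> incidence"
    show "?B (iscale c f) = iscale c (?B f)"
      using ops(2)[OF Binc[OF f]] AB[OF f] BA Binc f
      by (metis incidence_scale)
  next
    fix f :: "'a \<Rightarrow> 'a \<Rightarrow> 'b" assume f: "f \<in> incidence"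
    show "?B f \<in> incidence" using Binc[OF f] .
  qed
qed



definition Dg :: "('a::{order,finite} \<Rightarrow> 'a \<Rightarrow> 'k::field) set" where
  "Dg = {f. \<forall>u v. u \<noteq> v \<longrightarrow> f u v = 0}"

definition good :: "nat \<Rightarrow> (('a::{order,finite} \<Rightarrow> 'a \<Rightarrow> 'k::field) \<Rightarrow> ('a \<Rightarrow> 'a \<Rightarrow> 'k)) \<Rightarrow> bool" where
  "good k \<psi> \<longleftrightarrow> (\<forall>d\<in>Dg. \<forall>u v. u \<noteq> v \<longrightarrow> \<psi> d u v \<noteq> 0 \<longrightarrow> k \<le> ilen u v)"

definition diagpart :: "('a::{order,finite} \<Rightarrow> 'a \<Rightarrow> 'k::field) \<Rightarrow> ('a \<Rightarrow> 'a \<Rightarrow> 'k)" where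
  "diagpart g = (\<lambda>u v. if u = v then g u v else 0)"

lemma Dg_incidence: "d \<in> Dg \<Longrightarrow> d \<in> incidence"
  by (auto simp: Dg_def incidence_def)

lemma ebasis_Dg: "ebasis a a \<in> Dg"
  by (auto simp: Dg_def ebasis_def)

lemma diagpart_Dg: "diagpart g \<in> Dg"
  by (auto simp: Dg_def diagpart_def)

lemma offdiag_Fil1:
  assumes "g \<in> incidence"
  shows "g - diagpart g \<in> Fil 1"
  unfolding Fil_iff
proof (intro conjI allI impI)
  show "g - diagpart g \<in> incidence" by (intro incidence_diff assms Dg_incidence diagpart_Dg)
  fix u v assume "(g - diagpart g) u v \<noteq> 0"
  then have "u \<noteq> v" "g u v \<noteq> 0" by (auto simp: diagpart_def split: if_splits)
  then show "1 \<le> ilen u v" using assms by (intro ilen_pos) (auto simp: incidence_iff less_le)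
qed

lemma Fil1_diag: "h \<in> Fil 1 \<Longrightarrow> h u u = 0"
  unfolding Fil_iff by (metis ilen_refl not_one_le_zero)

lemma imult_Dg_left:
  assumes "d \<in> Dg"
  shows "imult d f u v = (if u \<le> v then d u u * f u v else 0)"
proof -
  have "imult d f u v = (\<Sum>t\<in>{t. u \<le> t \<and> t \<le> v}. if t = u then d u u * f u v else 0)"
    unfolding imult_def using assms by (intro sum.cong refl) (auto simp: Dg_def)
  also have "\<dots> = (if u \<le> v then d u u * f u v else 0)"
    by (subst sum.delta) auto
  finally show ?thesis .
qed

lemma imult_Dg_right:
  assumes "d \<in> Dg"
  shows "imult f d u v = (if u \<le> v then f u v * d v v else 0)"
proof -
  have "imult f d u v = (\<Sum>t\<in>{t. u \<le> t \<and> t \<le> v}. if t = v then f u v * d v v else 0)"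
    unfolding imult_def using assms by (intro sum.cong refl) (auto simp: Dg_def)
  also have "\<dots> = (if u \<le> v then f u v * d v v else 0)"
    by (subst sum.delta) auto
  finally show ?thesis .
qed

lemma ibracket_Dg_apply:
  assumes "d \<in> Dg" "f \<in> incidence"
  shows "ibracket d f u v = (d u u - d v v) * f u v"
  using assms by (auto simp: ibracket_def imult_Dg_left imult_Dg_right incidence_iff algebra_simps)

lemma ibracket_Dg_Dg:
  assumes "d \<in> Dg" "d' \<in> Dg"
  shows "ibracket d d' = 0"
proof (intro ext)
  fix u v
  show "ibracket d d' u v = 0 u v"
    using assms by (cases "u = v") (auto simp: ibracket_Dg_apply Dg_incidence Dg_def)
qed

lemma ibracket_Dg_ebasis:
  assumes "d \<in> Dg" "x \<le> y"
  shows "ibracket d (ebasis x y) = iscale (d x x - d y y) (ebasis x y)"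
proof (intro ext)
  fix u v
  show "ibracket d (ebasis x y) u v = iscale (d x x - d y y) (ebasis x y) u v"
    unfolding ibracket_Dg_apply[OF assms(1) ebasis_incidence[OF assms(2)]]
    by (auto simp: ebasis_apply iscale_apply)
qed

lemma tilde_cong:
  assumes "\<And>x y. x \<le> y \<Longrightarrow> Lcomp (ilen x y) (\<psi> (ebasis x y)) = Lcomp (ilen x y) (\<psi>' (ebasis x y))"
  shows "tilde \<psi> = tilde \<psi>'"
  unfolding tilde_def using assms by (intro ext sum.cong refl) auto

lemma tilde_conjw:
  assumes "lie_automorphism \<psi>" "s < t"
  shows "tilde (conjw s t \<alpha> \<circ> \<psi>) = tilde \<psi>"
proof (rule tilde_cong)
  fix x y :: 'a assume xy: "x \<le> y"
  let ?g = "\<psi> (ebasis x y)"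
  have gF: "?g \<in> Fil (ilen x y)"
    using lieh_Fil[OF lie_lieh[OF assms(1)] ebasis_Fil[OF xy]] .
  have "ibracket (ebasis s t) ?g \<in> Fil (ilen s t + ilen x y)"
    using ibracket_Fil[OF ebasis_Fil[of s t] gF] assms(2) by simp
  then have bF: "ibracket (ebasis s t) ?g \<in> Fil (Suc (ilen x y))"
    using ilen_pos[OF assms(2)] Fil_mono[of "Suc (ilen x y)" "ilen s t + ilen x y"] by auto
  show "Lcomp (ilen x y) ((conjw s t \<alpha> \<circ> \<psi>) (ebasis x y)) = Lcomp (ilen x y) ?g"
  proof (intro ext)
    fix u v
    have "ilen u v = ilen x y \<Longrightarrow> ibracket (ebasis s t) ?g u v = 0"
      using bF unfolding Fil_iff by (metis Suc_n_not_le_n)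
    then show "Lcomp (ilen x y) ((conjw s t \<alpha> \<circ> \<psi>) (ebasis x y)) u v = Lcomp (ilen x y) ?g u v"
      by (auto simp: Lcomp_def conjw_def iscale_def)
  qed
qed

lemma bracket_e_zero:
  assumes "g \<in> incidence" "s < t" "(u, v) \<noteq> (s, t)" "ilen u v \<le> ilen s t"
  shows "ibracket (ebasis s t) g u v = 0"
proof -
  have A: "g t v = 0" if "u = s" "v \<noteq> t"
  proof (rule ccontr)
    assume "g t v \<noteq> 0"
    then have "t \<le> v" using assms(1) by (auto simp: incidence_iff)
    then have "t < v" using that by (auto simp: less_le)
    then have "ilen s t + 1 \<le> ilen s v"
      using ilen_trans[of s t v] ilen_pos[of t v] assms(2) by (simp add: less_imp_le)
    then show False using assms(4) that by simp
  qed
  have B: "g u s = 0" if "v = t" "u \<noteq> s"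
  proof (rule ccontr)
    assume "g u s \<noteq> 0"
    then have "u \<le> s" using assms(1) by (auto simp: incidence_iff)
    then have "u < s" using that by (auto simp: less_le)
    then have "1 + ilen s t \<le> ilen u t"
      using ilen_trans[of u s t] ilen_pos[of u s] assms(2) by (simp add: less_imp_le)
    then show False using assms(4) that by simp
  qed
  show ?thesis
    using A B assms(3) by (simp add: ibracket_ebasis_apply[OF assms(1) less_imp_le[OF assms(2)]])
qed

lemma imult_good_st:
  assumes "A \<in> incidence" "B \<in> incidence" "s < t" "ilen s t = k"
    and gA: "\<And>u v. u \<noteq> v \<Longrightarrow> A u v \<noteq> 0 \<Longrightarrow> k \<le> ilen u v"
    and gB: "\<And>u v. u \<noteq> v \<Longrightarrow> B u v \<noteq> 0 \<Longrightarrow> k \<le> ilen u v"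
  shows "imult A B s t = A s s * B s t + A s t * B t t"
proof -
  have k1: "1 \<le> k" using ilen_pos[OF assms(3)] assms(4) by simp
  have "imult A B s t = (\<Sum>\<tau>\<in>{\<tau>. s \<le> \<tau> \<and> \<tau> \<le> t}. A s \<tau> * B \<tau> t)"
    by (simp add: imult_def)
  also have "\<dots> = (\<Sum>\<tau>\<in>{s, t}. A s \<tau> * B \<tau> t)"
  proof (rule sum.mono_neutral_right)
    show "finite {\<tau>. s \<le> \<tau> \<and> \<tau> \<le> t}" by simp
    show "{s, t} \<subseteq> {\<tau>. s \<le> \<tau> \<and> \<tau> \<le> t}" using assms(3) by auto
    show "\<forall>i\<in>{\<tau>. s \<le> \<tau> \<and> \<tau> \<le> t} - {s, t}. A s i * B i t = 0"
    proof (intro ballI)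
      fix \<tau> assume \<tau>: "\<tau> \<in> {\<tau>. s \<le> \<tau> \<and> \<tau> \<le> t} - {s, t}"
      then have st: "s < \<tau>" "\<tau> < t" by (auto simp: less_le)
      show "A s \<tau> * B \<tau> t = 0"
      proof (rule ccontr)
        assume "A s \<tau> * B \<tau> t \<noteq> 0"
        then have "k \<le> ilen s \<tau>" "k \<le> ilen \<tau> t" using gA gB st by auto
        moreover have "ilen s \<tau> + ilen \<tau> t \<le> k"
          using ilen_trans[of s \<tau> t] st assms(4) by (simp add: less_imp_le)
        ultimately show False using k1 by linarith
      qed
    qed
  qed
  also have "\<dots> = A s s * B s t + A s t * B t t"
    using assms(3) by simp
  finally show ?thesis .
qed



lemma lie_inc: "lie_automorphism \<psi> \<Longrightarrow> f \<in> incidence \<Longrightarrow> \<psi> f \<in> incidence"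
  by (auto simp: lie_automorphism_def bij_betw_def)

lemma lie_surj: "lie_automorphism \<psi> \<Longrightarrow> h \<in> incidence \<Longrightarrow> \<exists>g\<in>incidence. \<psi> g = h"
  unfolding lie_automorphism_def bij_betw_def by (metis imageE)

lemma diag_target:
  assumes lie: "lie_automorphism \<psi>" and h: "h \<in> incidence"
  obtains g0 where "g0 \<in> Dg" "\<And>u. \<psi> g0 u u = h u u"
proof -
  obtain g where g: "g \<in> incidence" "\<psi> g = h" using lie_surj[OF lie h] by blast
  define g0 where "g0 = diagpart g"
  have g0D: "g0 \<in> Dg" by (simp add: g0_def diagpart_Dg)
  have g1: "g - g0 \<in> Fil 1" unfolding g0_def by (rule offdiag_Fil1[OF g(1)])
  have "g = g0 + (g - g0)" by simp
  then have "\<psi> g = \<psi> g0 + \<psi> (g - g0)"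
    using lie g0D g1 Dg_incidence Fil_incidence unfolding lie_automorphism_def by metis
  moreover have "\<psi> (g - g0) \<in> Fil 1" using lieh_Fil[OF lie_lieh[OF lie] g1] .
  ultimately have "\<And>u. \<psi> g0 u u = h u u" using g(2) Fil1_diag by fastforce
  then show ?thesis using that g0D by blast
qed

lemma key_step:
  assumes lie: "lie_automorphism \<psi>" and good: "good k \<psi>" and st: "s < t" "ilen s t = k"
  shows "\<exists>\<alpha>. good k (conjw s t \<alpha> \<circ> \<psi>) \<and> (\<forall>d\<in>Dg. (conjw s t \<alpha> \<circ> \<psi>) d s t = 0) \<and>
          (\<forall>d\<in>Dg. \<forall>u v. (u, v) \<noteq> (s, t) \<longrightarrow> ilen u v \<le> k \<longrightarrow> (conjw s t \<alpha> \<circ> \<psi>) d u v = \<psi> d u v)"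
proof -
  have inc: "\<And>d. d \<in> Dg \<Longrightarrow> \<psi> d \<in> incidence" using lie_inc[OF lie] Dg_incidence by blast
  have gd: "\<And>d u v. d \<in> Dg \<Longrightarrow> u \<noteq> v \<Longrightarrow> \<psi> d u v \<noteq> 0 \<Longrightarrow> k \<le> ilen u v"
    using good by (auto simp: good_def)
  have val: "\<And>\<alpha> d u v. (conjw s t \<alpha> \<circ> \<psi>) d u v = \<psi> d u v + \<alpha> * ibracket (ebasis s t) (\<psi> d) u v"
    by (simp add: conjw_def iscale_apply)
  have atst: "\<And>d. d \<in> Dg \<Longrightarrow> ibracket (ebasis s t) (\<psi> d) s t = \<psi> d t t - \<psi> d s s"
    using st(1) by (simp add: ibracket_ebasis_apply[OF inc less_imp_le[OF st(1)]])
  obtain g0 where g0: "g0 \<in> Dg" "\<And>u. \<psi> g0 u u = ebasis s s u u"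
    using diag_target[OF lie ebasis_incidence[of s s]] by auto
  have g0s: "\<psi> g0 s s = 1" "\<psi> g0 t t = 0" using g0(2) st(1) by (auto simp: ebasis_apply)
  have rel: "(\<psi> d s s - \<psi> d t t) * \<psi> g0 s t = \<psi> d s t" if d: "d \<in> Dg" for d
  proof -
    have "ibracket (\<psi> d) (\<psi> g0) = \<psi> (ibracket d g0)"
      using lie Dg_incidence[OF d] Dg_incidence[OF g0(1)] unfolding lie_automorphism_def by metis
    also have "\<dots> = 0" using ibracket_Dg_Dg[OF d g0(1)] lin_zero[OF lie_lin[OF lie]] by simp
    finally have "ibracket (\<psi> d) (\<psi> g0) s t = 0" by simp
    then have "imult (\<psi> d) (\<psi> g0) s t - imult (\<psi> g0) (\<psi> d) s t = 0"
      by (simp add: ibracket_def)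
    moreover have "imult (\<psi> d) (\<psi> g0) s t = \<psi> d s s * \<psi> g0 s t + \<psi> d s t * \<psi> g0 t t"
      by (rule imult_good_st[OF inc[OF d] inc[OF g0(1)] st]) (auto intro: gd d g0(1))
    moreover have "imult (\<psi> g0) (\<psi> d) s t = \<psi> g0 s s * \<psi> d s t + \<psi> g0 s t * \<psi> d t t"
      by (rule imult_good_st[OF inc[OF g0(1)] inc[OF d] st]) (auto intro: gd d g0(1))
    ultimately show ?thesis using g0s by (simp add: algebra_simps)
  qed
  define \<alpha> where "\<alpha> = \<psi> g0 s t"
  have Z: "\<forall>d\<in>Dg. (conjw s t \<alpha> \<circ> \<psi>) d s t = 0"
  proof
    fix d :: "'a \<Rightarrow> 'a \<Rightarrow> 'b" assume d: "d \<in> Dg"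
    show "(conjw s t \<alpha> \<circ> \<psi>) d s t = 0"
      unfolding val atst[OF d] using rel[OF d] by (simp add: \<alpha>_def algebra_simps)
  qed
  have U: "\<forall>d\<in>Dg. \<forall>u v. (u, v) \<noteq> (s, t) \<longrightarrow> ilen u v \<le> k \<longrightarrow> (conjw s t \<alpha> \<circ> \<psi>) d u v = \<psi> d u v"
    using bracket_e_zero[OF inc st(1)] st(2) val by auto
  have G: "good k (conjw s t \<alpha> \<circ> \<psi>)"
    unfolding good_def
  proof (intro ballI allI impI)
    fix d :: "'a \<Rightarrow> 'a \<Rightarrow> 'b" and u v
    assume d: "d \<in> Dg" and uv: "u \<noteq> v" and nz: "(conjw s t \<alpha> \<circ> \<psi>) d u v \<noteq> 0"
    show "k \<le> ilen u v"
    proof (cases "(u, v) = (s, t) \<or> k < ilen u v")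
      case True then show ?thesis using st(2) by auto
    next
      case False
      then have "(conjw s t \<alpha> \<circ> \<psi>) d u v = \<psi> d u v" using U d by auto
      then show ?thesis using gd[OF d uv] nz by simp
    qed
  qed
  show ?thesis using Z U G by blast
qed



lemma test_pairs:
  fixes u v u' v' :: "'a::{order,finite}"
  assumes eq: "\<And>d'::'a \<Rightarrow> 'a \<Rightarrow> 'k::field. d' \<in> Dg \<Longrightarrow> d' u' u' - d' v' v' = d' u u - d' v v"
    and uv: "u < v" "u' < v'"
  shows "u' = u \<and> v' = v"
proof -
  have eb: "\<And>a b. ebasis a a b b = (if b = a then (1::'k) else 0)" by (simp add: ebasis_apply)
  have vu: "v \<noteq> u" "v' \<noteq> u'" using uv by auto
  have "u' = u"
  proof (rule ccontr)
    assume ne: "u' \<noteq> u"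
    have "(ebasis u u u' u' :: 'k) - ebasis u u v' v' = ebasis u u u u - ebasis u u v v"
      using eq[OF ebasis_Dg[of u]] .
    then have "- ebasis u u v' v' = (1::'k)" using ne vu by (simp add: eb)
    then have A: "v' = u" by (auto simp: eb split: if_splits)
    have "(ebasis u' u' u' u' :: 'k) - ebasis u' u' v' v' = ebasis u' u' u u - ebasis u' u' v v"
      using eq[OF ebasis_Dg[of u']] .
    then have "- ebasis u' u' v v = (1::'k)" using ne vu by (simp add: eb)
    then have B: "v = u'" by (auto simp: eb split: if_splits)
    show False using A B uv by auto
  qed
  moreover have "v' = v"
  proof -
    have "(ebasis v v u' u' :: 'k) - ebasis v v v' v' = ebasis v v u u - ebasis v v v v"
      using eq[OF ebasis_Dg[of v]] .
    then have "ebasis v v v' v' = (1::'k)" using \<open>u' = u\<close> vu by (simp add: eb)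
    then show ?thesis by (auto simp: eb split: if_splits)
  qed
  ultimately show ?thesis by simp
qed

lemma Lcomp_Dg: "f \<in> Dg \<Longrightarrow> Lcomp 0 f = f"
proof (intro ext)
  fix u v assume "f \<in> Dg"
  then show "Lcomp 0 f u v = f u v"
    by (cases "u = v") (auto simp: Lcomp_def Dg_def)
qed

lemma base_case:
  assumes lie: "lie_automorphism \<psi>" and good: "good (card (UNIV::'a set)) (\<psi> :: ('a::{order,finite} \<Rightarrow> 'a \<Rightarrow> 'k::field) \<Rightarrow> _)"
  shows "lie_automorphism (tilde \<psi>)"
proof -
  have inc: "\<And>f. f \<in> incidence \<Longrightarrow> \<psi> f \<in> incidence" using lie_inc[OF lie] .
  have lin: "lin \<psi>" using lie_lin[OF lie] .
  have DgD: "\<psi> d \<in> Dg" if d: "d \<in> Dg" for d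
    unfolding Dg_def
  proof (intro CollectI allI impI)
    fix u v :: 'a assume "u \<noteq> v"
    show "\<psi> d u v = 0"
    proof (rule ccontr)
      assume "\<psi> d u v \<noteq> 0"
      then have "card (UNIV::'a set) \<le> ilen u v" using good d \<open>u \<noteq> v\<close> by (auto simp: good_def)
      then show False using ilen_less_card[of u v] by simp
    qed
  qed
  have pre: "\<exists>g\<in>Dg. \<psi> g = h" if h: "h \<in> Dg" for h
  proof -
    obtain g0 where g0: "g0 \<in> Dg" "\<And>u. \<psi> g0 u u = h u u"
      using diag_target[OF lie Dg_incidence[OF h]] by blast
    have "\<psi> g0 = h"
    proof (intro ext)
      fix u v show "\<psi> g0 u v = h u v"
        using g0 DgD[OF g0(1)] h by (cases "u = v") (auto simp: Dg_def)
    qed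
    then show ?thesis using g0(1) by blast
  qed
  have injp: "inj_on \<psi> incidence" using lie by (simp add: lie_automorphism_def bij_betw_def)
  have psi0: "\<psi> 0 = 0" using lin_zero[OF lin] .
  have basis: "Lcomp (ilen x y) (\<psi> (ebasis x y)) = \<psi> (ebasis x y)" if xy: "x \<le> y" for x y
  proof (cases "x = y")
    case True
    then show ?thesis using DgD[OF ebasis_Dg[of x]] by (simp add: Lcomp_Dg)
  next
    case False
    then have xy': "x < y" using xy by (simp add: less_le)
    define f where "f = \<psi> (ebasis x y)"
    have finc: "f \<in> incidence" unfolding f_def using inc xy by simp
    have eig: "(\<psi> d u u - \<psi> d v v) * f u v = (d x x - d y y) * f u v" if d: "d \<in> Dg" for d u v
    proof -
      have "ibracket (\<psi> d) f = \<psi> (ibracket d (ebasis x y))"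
        using lie Dg_incidence[OF d] ebasis_incidence[OF xy] unfolding f_def lie_automorphism_def by metis
      also have "\<dots> = \<psi> (iscale (d x x - d y y) (ebasis x y))"
        by (simp add: ibracket_Dg_ebasis[OF d xy])
      also have "\<dots> = iscale (d x x - d y y) f"
        using lin ebasis_incidence[OF xy] unfolding f_def lin_def by blast
      finally have "ibracket (\<psi> d) f u v = iscale (d x x - d y y) f u v" by simp
      then show ?thesis by (simp add: ibracket_Dg_apply[OF DgD[OF d] finc] iscale_apply)
    qed
    have supp: "\<psi> d u u - \<psi> d v v = d x x - d y y" if d: "d \<in> Dg" and nz: "f u v \<noteq> 0" for d u v
      using eig[OF d, of u v] nz by simp
    have supp_lt: "u < v" if nz: "f u v \<noteq> 0" for u v
    proof -
      have "y \<noteq> x" using xy' by simp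
      then have "u \<noteq> v" using supp[OF ebasis_Dg[of x] nz] by (auto simp: ebasis_apply)
      moreover have "u \<le> v" using finc nz by (auto simp: incidence_iff)
      ultimately show ?thesis by (simp add: less_le)
    qed
    have "f \<noteq> 0"
    proof
      assume "f = 0"
      then have "\<psi> (ebasis x y) = \<psi> 0" using psi0 f_def by simp
      then have "ebasis x y = (0 :: 'a \<Rightarrow> 'a \<Rightarrow> 'k)"
        using injp ebasis_incidence[OF xy] incidence_zero by (meson inj_onD)
      then show False by (metis ebasis_apply zero_fun_apply zero_neq_one)
    qed
    have "\<exists>u v. f u v \<noteq> 0"
    proof (rule ccontr)
      assume "\<not> (\<exists>u v. f u v \<noteq> 0)"
      then have "f = 0" by (auto simp: fun_eq_iff)
      then show False using \<open>f \<noteq> 0\<close> by simp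
    qed
    then obtain u v where uv: "f u v \<noteq> 0" by blast
    have uvlt: "u < v" using supp_lt[OF uv] .
    have uniq: "u' = u \<and> v' = v" if nz: "f u' v' \<noteq> 0" for u' v'
    proof (rule test_pairs[OF _ uvlt supp_lt[OF nz]])
      fix d' :: "'a \<Rightarrow> 'a \<Rightarrow> 'k" assume "d' \<in> Dg"
      then obtain d where d: "d \<in> Dg" "\<psi> d = d'" using pre by blast
      show "d' u' u' - d' v' v' = d' u u - d' v v"
        using supp[OF d(1) nz] supp[OF d(1) uv] d(2) by simp
    qed
    define c where "c = f u v"
    have fc: "f = iscale c (ebasis u v)"
    proof (intro ext)
      fix u' v' show "f u' v' = iscale c (ebasis u v) u' v'"
        using uniq[of u' v'] by (cases "f u' v' = 0") (auto simp: c_def iscale_apply ebasis_apply)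
    qed
    have le1: "ilen x y \<le> ilen u v"
      using lieh_Fil[OF lie_lieh[OF lie] ebasis_Fil[OF xy]] uv unfolding f_def[symmetric]
      by (auto simp: Fil_def)
    define B where "B = inv_into incidence \<psi>"
    have lB: "lieh B" unfolding B_def by (rule lie_inv[OF lie])
    have bij: "bij_betw \<psi> incidence incidence" using lie by (simp add: lie_automorphism_def)
    have "B f = ebasis x y"
      unfolding B_def f_def by (rule bij_betw_inv_into_left[OF bij ebasis_incidence[OF xy]])
    moreover have "B f = iscale c (B (ebasis u v))"
      using lB ebasis_incidence[of u v] uvlt unfolding fc lieh_def lin_def by (simp add: less_imp_le)
    ultimately have "c * B (ebasis u v) x y = 1"
      by (metis ebasis_apply iscale_apply)
    then have "B (ebasis u v) x y \<noteq> 0" by auto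
    moreover have "B (ebasis u v) \<in> Fil (ilen u v)"
      using lieh_Fil[OF lB ebasis_Fil[of u v]] uvlt by (simp add: less_imp_le)
    ultimately have le2: "ilen u v \<le> ilen x y" by (auto simp: Fil_def)
    show ?thesis unfolding f_def[symmetric]
    proof (intro ext)
      fix u' v'
      show "Lcomp (ilen x y) f u' v' = f u' v'"
        using uniq[of u' v'] le1 le2 uvlt by (cases "f u' v' = 0") (auto simp: Lcomp_def less_imp_le)
    qed
  qed
  have eq: "tilde \<psi> f = \<psi> f" if f: "f \<in> incidence" for f
  proof -
    have "tilde \<psi> f = (\<Sum>p\<in>{(x, y). x \<le> y}. iscale (f (fst p) (snd p)) (\<psi> (ebasis (fst p) (snd p))))"
      unfolding tilde_def by (intro sum.cong refl) (auto simp: basis)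
    also have "\<dots> = (\<Sum>p\<in>{(x, y). x \<le> y}. \<psi> (iscale (f (fst p) (snd p)) (ebasis (fst p) (snd p))))"
      using lin by (intro sum.cong refl) (auto simp: lin_def)
    also have "\<dots> = \<psi> (\<Sum>p\<in>{(x, y). x \<le> y}. iscale (f (fst p) (snd p)) (ebasis (fst p) (snd p)))"
      by (rule lin_sum[symmetric, OF lin]) auto
    also have "\<dots> = \<psi> f" using incidence_expand[OF f] by simp
    finally show ?thesis .
  qed
  show ?thesis by (rule lie_cong[OF lie eq])
qed



lemma good_mono: "good k \<psi> \<Longrightarrow> j \<le> k \<Longrightarrow> good j \<psi>"
  by (auto simp: good_def intro: le_trans)

lemma main_ind:
  fixes \<psi> :: "('a::{order,finite} \<Rightarrow> 'a \<Rightarrow> 'k::field) \<Rightarrow> ('a \<Rightarrow> 'a \<Rightarrow> 'k)"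
  shows "card (UNIV::'a set) - k = n \<Longrightarrow> lie_automorphism \<psi> \<Longrightarrow> good k \<psi> \<Longrightarrow> lie_automorphism (tilde \<psi>)"
proof (induction n arbitrary: k \<psi>)
  case 0
  then show ?case using base_case good_mono by (metis diff_is_0_eq)
next
  case (Suc n)
  have P: "\<And>\<psi>::('a \<Rightarrow> 'a \<Rightarrow> 'k) \<Rightarrow> ('a \<Rightarrow> 'a \<Rightarrow> 'k). lie_automorphism \<psi> \<Longrightarrow> good k \<psi> \<Longrightarrow>
        (\<forall>d\<in>Dg. \<forall>u v. u \<noteq> v \<longrightarrow> ilen u v = k \<longrightarrow> (u, v) \<notin> S \<longrightarrow> \<psi> d u v = 0) \<Longrightarrow>
        lie_automorphism (tilde \<psi>)" if fin: "finite S" for S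
    using fin
  proof (induction S rule: finite_induct)
    case empty
    have "good (Suc k) \<psi>"
      unfolding good_def
    proof (intro ballI allI impI)
      fix d :: "'a \<Rightarrow> 'a \<Rightarrow> 'k" and u v assume d: "d \<in> Dg" and uv: "u \<noteq> v" and nz: "\<psi> d u v \<noteq> 0"
      have "k \<le> ilen u v" using empty.prems(2) d uv nz by (auto simp: good_def)
      moreover have "ilen u v \<noteq> k" using empty.prems(3) d uv nz by auto
      ultimately show "Suc k \<le> ilen u v" by simp
    qed
    moreover have "card (UNIV::'a set) - Suc k = n" using Suc.prems(1) by simp
    ultimately show ?case using Suc.IH empty.prems(1) by blast
  next
    case (insert w S)
    show ?case
    proof (cases "\<exists>s t. w = (s, t) \<and> s < t \<and> ilen s t = k")
      case True
      then obtain s t where w: "w = (s, t)" "s < t" "ilen s t = k" by blast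
      obtain \<alpha> where \<alpha>: "good k (conjw s t \<alpha> \<circ> \<psi>)" "\<forall>d\<in>Dg. (conjw s t \<alpha> \<circ> \<psi>) d s t = 0"
        "\<forall>d\<in>Dg. \<forall>u v. (u, v) \<noteq> (s, t) \<longrightarrow> ilen u v \<le> k \<longrightarrow> (conjw s t \<alpha> \<circ> \<psi>) d u v = \<psi> d u v"
        using key_step[OF insert.prems(1,2) w(2,3)] by blast
      have lie': "lie_automorphism (conjw s t \<alpha> \<circ> \<psi>)"
        by (rule lie_comp[OF conjw_lie[OF w(2)] insert.prems(1)])
      have "\<forall>d\<in>Dg. \<forall>u v. u \<noteq> v \<longrightarrow> ilen u v = k \<longrightarrow> (u, v) \<notin> S \<longrightarrow> (conjw s t \<alpha> \<circ> \<psi>) d u v = 0"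
      proof (intro ballI allI impI)
        fix d :: "'a \<Rightarrow> 'a \<Rightarrow> 'k" and u v
        assume d: "d \<in> Dg" and uv: "u \<noteq> v" "ilen u v = k" "(u, v) \<notin> S"
        show "(conjw s t \<alpha> \<circ> \<psi>) d u v = 0"
        proof (cases "(u, v) = (s, t)")
          case True then show ?thesis using \<alpha>(2) d by auto
        next
          case False
          then have "(conjw s t \<alpha> \<circ> \<psi>) d u v = \<psi> d u v" using \<alpha>(3) d uv(2) by blast
          moreover have "(u, v) \<notin> insert w S" using False w(1) uv(3) by auto
          ultimately show ?thesis using insert.prems(3) d uv(1,2) by metis
        qed
      qed
      then have "lie_automorphism (tilde (conjw s t \<alpha> \<circ> \<psi>))"
        using insert.IH[OF lie' \<alpha>(1)] by blast
      then show ?thesis using tilde_conjw[OF insert.prems(1) w(2)] by simp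
    next
      case False
      have "\<forall>d\<in>Dg. \<forall>u v. u \<noteq> v \<longrightarrow> ilen u v = k \<longrightarrow> (u, v) \<notin> S \<longrightarrow> \<psi> d u v = 0"
      proof (intro ballI allI impI)
        fix d :: "'a \<Rightarrow> 'a \<Rightarrow> 'k" and u v
        assume d: "d \<in> Dg" and uv: "u \<noteq> v" "ilen u v = k" "(u, v) \<notin> S"
        show "\<psi> d u v = 0"
        proof (rule ccontr)
          assume nz: "\<psi> d u v \<noteq> 0"
          have "\<psi> d \<in> incidence" using lie_inc[OF insert.prems(1) Dg_incidence[OF d]] .
          then have "u < v" using nz uv(1) by (auto simp: incidence_iff less_le)
          then have "w \<noteq> (u, v)" using False uv(2) by blast
          then show False using insert.prems(3) d uv nz by auto
        qed
      qed
      then show ?thesis using insert.IH[OF insert.prems(1,2)] by blast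
    qed
  qed
  have "(UNIV :: ('a \<times> 'a) set) \<noteq> {}" by simp
  show ?case using P[of UNIV] Suc.prems(2,3) by simp
qed


theorem proposition4p5:
  fixes \<phi> :: "('a::{order,finite} \<Rightarrow> 'a \<Rightarrow> 'k::field) \<Rightarrow> ('a \<Rightarrow> 'a \<Rightarrow> 'k)"
  assumes "poset_connected TYPE('a)"
    and "lie_automorphism \<phi>"
  shows "lie_automorphism (tilde \<phi>)"
  by (rule main_ind[where k = 0, OF refl assms(2)]) (simp add: good_def)
end
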